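(* With the matrices defined in the context, let $\mathbf{A}=\mathbf{A_N}+\frac{2}{h^2}I_{2n(n-1)}$ and $S=\mathbf{B}\mathbf{A}^{-1}\mathbf{B}^T$. Then $$S^\dagger=S_N^\dagger+\frac{2}{h^2}(\mathbf{B}\mathbf{B}^T)^\dagger,$$ where $S_N=\mathbf{B}\mathbf{A_N}^{-1}\mathbf{B}^T$.
   Context: Fix an integer $n\ge 2$ and set $h=1/n$. Let $I_m$ denote the $m\times m$ identity matrix and $\otimes$ the Kronecker product. Let $\mathrm{B}\in\mathbb{R}^{n\times(n-1)}$ be $\mathrm{B}=\frac1h M$, where $M_{i,i}=1$ and $M_{i+1,i}=-1$ for $1\le i\le n-1$, all other entries $0$. Define $\mathrm{B}^u_x=I_n\otimes \mathrm{B}$, $\mathrm{B}^v_y=\mathrm{B}\otimes I_n$, $\mathrm{B}^q_x=I_{n-1}\otimes\mathrm{B}$, $\mathrm{B}^q_y=\mathrm{B}\otimes I_{n-1}$. Let $\mathbf{B}=\begin{bmatrix}-\mathrm{B}^u_x & -\mathrm{B}^v_y\end{bmatrix}\in\mathbb{R}^{n^2\times 2n(n-1)}$ and $\mathbf{C}=\begin{bmatrix}-(\mathrm{B}^q_y)^T & (\mathrm{B}^q_x)^T\end{bmatrix}\in\mathbb{R}^{(n-1)^2\times 2n(n-1)}$, and let $\mathbf{A_N}=\mathbf{B}^T\mathbf{B}+\mathbf{C}^T\mathbf{C}$ (invertible). The matrix $\mathbf{B}\mathbf{B}^T\in\mathbb{R}^{n^2\times n^2}$ is the pressure Laplacian with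 Neumann boundary conditions. The superscript $\dagger$ denotes the Moore–Penrose pseudoinverse. *)

theory Defs
  imports "Jordan_Normal_Form.Matrix"
begin

definition kron :: "real mat \<Rightarrow> real mat \<Rightarrow> real mat" where
  "kron A B = mat (dim_row A * dim_row B) (dim_col A * dim_col B)
     (\<lambda>(i,j). A $$ (i div dim_row B, j div dim_col B) * B $$ (i mod dim_row B, j mod dim_col B))"

definition hcat :: "real mat \<Rightarrow> real mat \<Rightarrow> real mat" where
  "hcat X Y = mat (dim_row X) (dim_col X + dim_col Y)
     (\<lambda>(i,j). if j < dim_col X then X $$ (i,j) else Y $$ (i, j - dim_col X))"

definition inv_mat :: "real mat \<Rightarrow> real mat" where
  "inv_mat A = (THE X. X \<in> carrier_mat (dim_row A) (dim_row A) \<and> A * X = 1\<^sub>m (dim_row A)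
                        \<and> X * A = 1\<^sub>m (dim_row A))"

definition pinv :: "real mat \<Rightarrow> real mat" where
  "pinv A = (THE X. X \<in> carrier_mat (dim_col A) (dim_row A) \<and> A * X * A = A \<and> X * A * X = X
              \<and> transpose_mat (A * X) = A * X \<and> transpose_mat (X * A) = X * A)"

definition hh :: "nat \<Rightarrow> real" where "hh n = 1 / real n"

text \<open>M in R^{n x (n-1)}: M(i,i)=1, M(i+1,i)=-1 (1-based in the paper).\<close>
definition Mmat :: "nat \<Rightarrow> real mat" where
  "Mmat n = mat n (n - 1) (\<lambda>(i,j). if i = j then 1 else if i = j + 1 then -1 else 0)"

definition Bmat :: "nat \<Rightarrow> real mat" where
  "Bmat n = (1 / hh n) \<cdot>\<^sub>m Mmat n"

definition Bux :: "nat \<Rightarrow> real mat" where "Bux n = kron (1\<^sub>m n) (Bmat n)"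
definition Bvy :: "nat \<Rightarrow> real mat" where "Bvy n = kron (Bmat n) (1\<^sub>m n)"
definition Bqx :: "nat \<Rightarrow> real mat" where "Bqx n = kron (1\<^sub>m (n - 1)) (Bmat n)"
definition Bqy :: "nat \<Rightarrow> real mat" where "Bqy n = kron (Bmat n) (1\<^sub>m (n - 1))"

definition BB :: "nat \<Rightarrow> real mat" where
  "BB n = hcat (- Bux n) (- Bvy n)"

definition CC :: "nat \<Rightarrow> real mat" where
  "CC n = hcat (- transpose_mat (Bqy n)) (transpose_mat (Bqx n))"

definition AN :: "nat \<Rightarrow> real mat" where
  "AN n = transpose_mat (BB n) * BB n + transpose_mat (CC n) * CC n"

end

theory Submission imports Defs "Jordan_Normal_Form.Determinant" begin


lemma massoc: "dim_col A = dim_row B \<Longrightarrow> dim_col B = dim_row C \<Longrightarrow> (A::'a::semiring_0 mat) * B * C = A * (B * C)"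
  by (rule assoc_mult_mat[of A "dim_row A" "dim_col A" B "dim_col B" C "dim_col C"]) auto

lemma mtrans: "dim_col A = dim_row B \<Longrightarrow> transpose_mat ((A::'a::comm_semiring_0 mat) * B) = transpose_mat B * transpose_mat A"
  by (rule transpose_mult[of A "dim_row A" "dim_col A" B "dim_col B"]) auto

lemma inv_mat_eq:
  assumes A: "A \<in> carrier_mat k k" and X: "X \<in> carrier_mat k k"
    and AX: "A * X = 1\<^sub>m k" and XA: "X * A = 1\<^sub>m k"
  shows "inv_mat A = X"
  unfolding inv_mat_def
proof (rule the_equality)
  show "X \<in> carrier_mat (dim_row A) (dim_row A) \<and> A * X = 1\<^sub>m (dim_row A) \<and> X * A = 1\<^sub>m (dim_row A)"
    using A X AX XA by auto
  fix Y assume Y: "Y \<in> carrier_mat (dim_row A) (dim_row A) \<and> A * Y = 1\<^sub>m (dim_row A) \<and> Y * A = 1\<^sub>m (dim_row A)"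
  hence Y': "Y \<in> carrier_mat k k" "A * Y = 1\<^sub>m k" "Y * A = 1\<^sub>m k" using A by auto
  have "Y = (X * A) * Y" using XA Y' by simp
  also have "\<dots> = X * (A * Y)" using X A Y' by simp
  also have "\<dots> = X" using Y' X by simp
  finally show "Y = X" .
qed

lemma pinv_eq:
  fixes A X :: "real mat"
  assumes A: "A \<in> carrier_mat m k" and X: "X \<in> carrier_mat k m"
    and c1: "A * X * A = A" and c2: "X * A * X = X"
    and c3: "transpose_mat (A * X) = A * X" and c4: "transpose_mat (X * A) = X * A"
  shows "pinv A = X"
  unfolding pinv_def
proof (rule the_equality)
  show "X \<in> carrier_mat (dim_col A) (dim_row A) \<and> A * X * A = A \<and> X * A * X = X
              \<and> transpose_mat (A * X) = A * X \<and> transpose_mat (X * A) = X * A"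
    using assms by auto
  fix Y assume "Y \<in> carrier_mat (dim_col A) (dim_row A) \<and> A * Y * A = A \<and> Y * A * Y = Y
              \<and> transpose_mat (A * Y) = A * Y \<and> transpose_mat (Y * A) = Y * A"
  hence Y: "Y \<in> carrier_mat k m" and d1: "A * Y * A = A" and d2: "Y * A * Y = Y"
    and d3: "transpose_mat (A * Y) = A * Y" and d4: "transpose_mat (Y * A) = Y * A" using A by auto
  have D[simp]: "dim_row A = m" "dim_col A = k" "dim_row X = k" "dim_col X = m" "dim_row Y = k" "dim_col Y = m"
    using A X Y by auto
  have c3': "transpose_mat X * transpose_mat A = A * X" using c3 by (simp add: mtrans)
  have c4': "transpose_mat A * transpose_mat X = X * A" using c4 by (simp add: mtrans)
  have d3': "transpose_mat Y * transpose_mat A = A * Y" using d3 by (simp add: mtrans)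
  have d4': "transpose_mat A * transpose_mat Y = Y * A" using d4 by (simp add: mtrans)
  have d1t: "transpose_mat A = transpose_mat A * (transpose_mat Y * transpose_mat A)"
    using arg_cong[OF d1, of transpose_mat] by (simp add: mtrans massoc)
  have c1t: "transpose_mat A = transpose_mat A * (transpose_mat X * transpose_mat A)"
    using arg_cong[OF c1, of transpose_mat] by (simp add: mtrans massoc)
  have "X = X * (A * X)" using c2 by (simp add: massoc)
  also have "\<dots> = X * (transpose_mat X * transpose_mat A)" using c3' by simp
  also have "\<dots> = X * (transpose_mat X * (transpose_mat A * (transpose_mat Y * transpose_mat A)))"
    using d1t by simp
  also have "\<dots> = X * ((transpose_mat X * transpose_mat A) * (transpose_mat Y * transpose_mat A))"
    by (simp add: massoc)
  also have "\<dots> = X * (A * X * (A * Y))" by (simp only: c3' d3')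
  also have "\<dots> = (X * A * X) * A * Y" by (simp add: massoc)
  finally have xe: "X = X * A * Y" using c2 by simp
  have "Y = (Y * A) * Y" using d2 by simp
  also have "\<dots> = (transpose_mat A * transpose_mat Y) * Y" using d4' by simp
  also have "\<dots> = ((transpose_mat A * transpose_mat X) * transpose_mat A * transpose_mat Y) * Y"
    using c1t by (simp add: massoc)
  also have "\<dots> = ((transpose_mat A * transpose_mat X) * (transpose_mat A * transpose_mat Y)) * Y"
    by (simp add: massoc)
  also have "\<dots> = ((X * A) * (Y * A)) * Y" by (simp only: c4' d4')
  also have "\<dots> = X * A * (Y * A * Y)" by (simp add: massoc)
  finally show "Y = X" using xe d2 by simp
qed



lemma madd_l: "dim_row A = dim_row B \<Longrightarrow> dim_col A = dim_col B \<Longrightarrow> dim_col A = dim_row C \<Longrightarrow>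
  ((A::'a::semiring_0 mat) + B) * C = A * C + B * C"
  by (rule add_mult_distrib_mat[of A "dim_row A" "dim_col A" B C "dim_col C"]) auto
lemma madd_r: "dim_col A = dim_row B \<Longrightarrow> dim_row B = dim_row C \<Longrightarrow> dim_col B = dim_col C \<Longrightarrow>
  (A::'a::semiring_0 mat) * (B + C) = A * B + A * C"
  by (rule mult_add_distrib_mat[of A "dim_row A" "dim_col A" B "dim_col B" C]) auto
lemma msm_l: "dim_col A = dim_row B \<Longrightarrow> (k \<cdot>\<^sub>m (A::'a::comm_semiring_0 mat)) * B = k \<cdot>\<^sub>m (A * B)"
  by (rule mult_smult_assoc_mat[of A "dim_row A" "dim_col A" B "dim_col B"]) auto
lemma msm_r: "dim_col A = dim_row B \<Longrightarrow> (A::'a::comm_semiring_0 mat) * (k \<cdot>\<^sub>m B) = k \<cdot>\<^sub>m (A * B)"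
  by (rule mult_smult_distrib[of A "dim_row A" "dim_col A" B "dim_col B"]) auto

lemma smult_mat_vec: "dim_vec v = dim_col A \<Longrightarrow> ((c::real) \<cdot>\<^sub>m A) *\<^sub>v v = c \<cdot>\<^sub>v (A *\<^sub>v v)"
  by (intro eq_vecI) (auto simp: scalar_prod_def sum_distrib_left ac_simps intro!: sum.cong)

lemma madd0r[simp]: "dim_row A = r \<Longrightarrow> dim_col A = c \<Longrightarrow> (A::'a::monoid_add mat) + 0\<^sub>m r c = A"
  by (intro eq_matI) auto
lemma madd0l[simp]: "dim_row A = r \<Longrightarrow> dim_col A = c \<Longrightarrow> 0\<^sub>m r c + (A::'a::monoid_add mat) = A"
  by (intro eq_matI) auto

lemma mtrans_smult[simp]: "transpose_mat (c \<cdot>\<^sub>m A) = c \<cdot>\<^sub>m transpose_mat A"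
  by (intro eq_matI) auto

lemma inv_comm:
  fixes M X N :: "real mat"
  assumes M: "M \<in> carrier_mat k k" and X: "X \<in> carrier_mat k k" and N: "N \<in> carrier_mat k k"
    and MX: "M * X = 1\<^sub>m k" and XM: "X * M = 1\<^sub>m k" and MN: "M * N = N * M"
  shows "X * N = N * X"
proof -
  have D[simp]: "dim_row M = k" "dim_col M = k" "dim_row X = k" "dim_col X = k" "dim_row N = k" "dim_col N = k"
    using M X N by auto
  have "X * N = X * N * (M * X)" using MX by simp
  also have "\<dots> = X * (N * M) * X" by (simp add: massoc)
  also have "\<dots> = (X * M) * N * X" using MN by (simp add: massoc)
  finally show ?thesis using XM by simp
qed

lemma inv_sym:
  fixes M X :: "real mat"
  assumes M: "M \<in> carrier_mat k k" and X: "X \<in> carrier_mat k k"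
    and MX: "M * X = 1\<^sub>m k" and XM: "X * M = 1\<^sub>m k" and MT: "transpose_mat M = M"
  shows "transpose_mat X = X"
proof -
  have D[simp]: "dim_row M = k" "dim_col M = k" "dim_row X = k" "dim_col X = k"
    using M X by auto
  have "transpose_mat X * M = 1\<^sub>m k" using arg_cong[OF MX, of transpose_mat] MT by (simp add: mtrans)
  have "transpose_mat X = transpose_mat X * (M * X)" using MX by simp
  also have "\<dots> = (transpose_mat X * M) * X" by (simp add: massoc)
  finally show ?thesis using \<open>transpose_mat X * M = 1\<^sub>m k\<close> by simp
qed

lemma sprod_self_ge: "(v::real vec) \<bullet> v \<ge> 0"
  unfolding scalar_prod_def by (auto intro: sum_nonneg)

lemma sprod_self_0: assumes "(v::real vec) \<bullet> v = 0" "v \<in> carrier_vec k" shows "v = 0\<^sub>v k"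
proof -
  have "\<forall>i\<in>{0..<dim_vec v}. v $ i * v $ i = 0"
    using assms(1) unfolding scalar_prod_def by (subst sum_nonneg_eq_0_iff[symmetric]) auto
  thus ?thesis using assms(2) by (intro eq_vecI) auto
qed

lemma quad_form:
  fixes B :: "real mat"
  assumes B: "B \<in> carrier_mat m k" and x: "x \<in> carrier_vec k"
  shows "x \<bullet> ((transpose_mat B * B) *\<^sub>v x) = (B *\<^sub>v x) \<bullet> (B *\<^sub>v x)"
proof -
  have "(transpose_mat B * B) *\<^sub>v x = transpose_mat B *\<^sub>v (B *\<^sub>v x)" using B x by simp
  hence "x \<bullet> ((transpose_mat B * B) *\<^sub>v x) = (transpose_mat B *\<^sub>v (B *\<^sub>v x)) \<bullet> x"
    using B x by (simp add: comm_scalar_prod[of x k])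
  also have "\<dots> = (B *\<^sub>v x) \<bullet> (B *\<^sub>v x)" using transpose_vec_mult_scalar[OF B x, of "B *\<^sub>v x"] B x by simp
  finally show ?thesis .
qed

lemma inj_inverse:
  fixes M :: "real mat"
  assumes M: "M \<in> carrier_mat k k" and inj: "\<And>x. x \<in> carrier_vec k \<Longrightarrow> M *\<^sub>v x = 0\<^sub>v k \<Longrightarrow> x = 0\<^sub>v k"
  shows "\<exists>X. X \<in> carrier_mat k k \<and> M * X = 1\<^sub>m k \<and> X * M = 1\<^sub>m k"
proof -
  have "det M \<noteq> 0" using det_0_iff_vec_prod_zero[OF M] inj by blast
  from det_non_zero_imp_unit[OF M this, of undefined]
  show ?thesis unfolding Units_def by (auto simp: ring_mat_def)
qed



lemma abstract_main:
  fixes B C :: "real mat" and c :: real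
  assumes B: "B \<in> carrier_mat m k" and C: "C \<in> carrier_mat p k"
    and BC: "B * transpose_mat C = 0\<^sub>m m p" and c: "c > 0"
    and inj: "\<And>x. x \<in> carrier_vec k \<Longrightarrow> (transpose_mat B * B + transpose_mat C * C) *\<^sub>v x = 0\<^sub>v k \<Longrightarrow> x = 0\<^sub>v k"
  shows "pinv (B * inv_mat (transpose_mat B * B + transpose_mat C * C + c \<cdot>\<^sub>m 1\<^sub>m k) * transpose_mat B)
       = pinv (B * inv_mat (transpose_mat B * B + transpose_mat C * C) * transpose_mat B)
         + c \<cdot>\<^sub>m pinv (B * transpose_mat B)"
proof -
  define AN where "AN = transpose_mat B * B + transpose_mat C * C"
  define AC where "AC = AN + c \<cdot>\<^sub>m 1\<^sub>m k"
  have DB[simp]: "dim_row B = m" "dim_col B = k" "dim_row C = p" "dim_col C = k" using B C by auto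
  have ANc: "AN \<in> carrier_mat k k" unfolding AN_def by auto
  have ACc: "AC \<in> carrier_mat k k" unfolding AC_def AN_def by auto
  have DA[simp]: "dim_row AN = k" "dim_col AN = k" "dim_row AC = k" "dim_col AC = k"
    using ANc ACc by auto
  have CB: "C * transpose_mat B = 0\<^sub>m p m"
    using arg_cong[OF BC, of transpose_mat] by (simp add: mtrans)
  have injAN: "\<And>x. x \<in> carrier_vec k \<Longrightarrow> AN *\<^sub>v x = 0\<^sub>v k \<Longrightarrow> x = 0\<^sub>v k"
    using inj unfolding AN_def by blast
  have qAN: "x \<bullet> (AN *\<^sub>v x) \<ge> 0" if x: "x \<in> carrier_vec k" for x
  proof -
    have "AN *\<^sub>v x = (transpose_mat B * B) *\<^sub>v x + (transpose_mat C * C) *\<^sub>v x"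
      unfolding AN_def by (rule add_mult_distrib_mat_vec[of _ k k]) (use x in auto)
    then have "x \<bullet> (AN *\<^sub>v x) = x \<bullet> ((transpose_mat B * B) *\<^sub>v x) + x \<bullet> ((transpose_mat C * C) *\<^sub>v x)"
      apply (simp only:) by (rule scalar_prod_add_distrib[of _ k]) (use x B C in auto)
    also have "\<dots> = (B *\<^sub>v x) \<bullet> (B *\<^sub>v x) + (C *\<^sub>v x) \<bullet> (C *\<^sub>v x)"
      using quad_form[OF B x] quad_form[OF C x] by simp
    finally show ?thesis using sprod_self_ge[of "B *\<^sub>v x"] sprod_self_ge[of "C *\<^sub>v x"] by simp
  qed
  have injAC: "x = 0\<^sub>v k" if x: "x \<in> carrier_vec k" and h: "AC *\<^sub>v x = 0\<^sub>v k" for x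
  proof -
    have "AC *\<^sub>v x = AN *\<^sub>v x + c \<cdot>\<^sub>v x"
      unfolding AC_def by (subst add_mult_distrib_mat_vec[of _ k k]) (use x ANc in \<open>auto simp: smult_mat_vec\<close>)
    hence "AN *\<^sub>v x + c \<cdot>\<^sub>v x = 0\<^sub>v k" using h by simp
    hence "0 = x \<bullet> (AN *\<^sub>v x + c \<cdot>\<^sub>v x)" using x by simp
    also have "\<dots> = x \<bullet> (AN *\<^sub>v x) + c * (x \<bullet> x)"
      using x ANc by (subst scalar_prod_add_distrib[of _ k]) auto
    finally have "x \<bullet> x = 0" using qAN[OF x] sprod_self_ge[of x] c
      by (smt (verit) mult_pos_pos mult_nonneg_nonneg)
    thus ?thesis using sprod_self_0 x by blast
  qed
  obtain X where Xc: "X \<in> carrier_mat k k" and ANX: "AN * X = 1\<^sub>m k" and XAN: "X * AN = 1\<^sub>m k"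
    using inj_inverse[OF ANc injAN] by blast
  obtain Y where Yc: "Y \<in> carrier_mat k k" and ACY: "AC * Y = 1\<^sub>m k" and YAC: "Y * AC = 1\<^sub>m k"
    using inj_inverse[OF ACc injAC] by blast
  have DX[simp]: "dim_row X = k" "dim_col X = k" "dim_row Y = k" "dim_col Y = k" using Xc Yc by auto
  have invX: "inv_mat AN = X" by (rule inv_mat_eq[OF ANc Xc ANX XAN])
  have invY: "inv_mat AC = Y" by (rule inv_mat_eq[OF ACc Yc ACY YAC])
  have ANT: "transpose_mat AN = AN" unfolding AN_def
    by (subst transpose_add[of _ k k]) (auto simp: mtrans)
  have ACT: "transpose_mat AC = AC" unfolding AC_def
    using ANT by (subst transpose_add[of _ k k]) (auto simp: ANc)
  have XT[simp]: "transpose_mat X = X" by (rule inv_sym[OF ANc Xc ANX XAN ANT])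
  have YT[simp]: "transpose_mat Y = Y" by (rule inv_sym[OF ACc Yc ACY YAC ACT])
  have BTBc: "transpose_mat B * B \<in> carrier_mat k k" by auto
  have comm0: "AN * (transpose_mat B * B) = (transpose_mat B * B) * AN"
  proof -
    have "AN * (transpose_mat B * B) = transpose_mat B * (B * (transpose_mat B * B)) + transpose_mat C * ((C * transpose_mat B) * B)"
      unfolding AN_def by (simp add: madd_l massoc)
    also have "\<dots> = transpose_mat B * (B * (transpose_mat B * B))" using CB by simp
    also have "\<dots> = transpose_mat B * ((B * (transpose_mat B * B)) + (B * transpose_mat C) * C)" using BC by simp
    also have "\<dots> = (transpose_mat B * B) * AN"
      unfolding AN_def by (simp add: madd_r massoc)
    finally show ?thesis .
  qed
  have comm1: "X * (transpose_mat B * B) = (transpose_mat B * B) * X"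
    by (rule inv_comm[OF ANc Xc BTBc ANX XAN comm0])
  have comm: "X * (transpose_mat B * (B * W)) = transpose_mat B * (B * (X * W))" if "dim_row W = k" for W
  proof -
    have "X * (transpose_mat B * (B * W)) = (X * (transpose_mat B * B)) * W" using that by (simp add: massoc)
    also have "\<dots> = transpose_mat B * (B * (X * W))" using that by (simp add: comm1 massoc)
    finally show ?thesis .
  qed
  have T1: "transpose_mat B * (B * (X * transpose_mat B)) = transpose_mat B"
  proof -
    have "transpose_mat B = (X * AN) * transpose_mat B" using XAN by simp
    also have "\<dots> = X * (transpose_mat B * (B * transpose_mat B)) + X * (transpose_mat C * (C * transpose_mat B))"
      unfolding AN_def by (simp add: madd_r madd_l massoc)
    also have "\<dots> = X * (transpose_mat B * (B * transpose_mat B))" using CB by simp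
    also have "\<dots> = transpose_mat B * (B * (X * transpose_mat B))" by (rule comm) simp
    finally show ?thesis by simp
  qed
  have F1: "B * (X * (transpose_mat B * B)) = B"
    using arg_cong[OF T1, of transpose_mat] by (simp add: mtrans massoc)
  have F1t: "B * (X * (transpose_mat B * (B * W))) = B * W" if "dim_row W = k" for W
  proof -
    have "B * (X * (transpose_mat B * (B * W))) = (B * (X * (transpose_mat B * B))) * W"
      using that by (simp add: massoc)
    thus ?thesis using F1 by simp
  qed
  have XY: "X = Y + c \<cdot>\<^sub>m (Y * X)"
  proof -
    have "X = (Y * AC) * X" using YAC by simp
    also have "\<dots> = Y * (AN * X) + c \<cdot>\<^sub>m (Y * X)"
      unfolding AC_def by (simp add: madd_r madd_l massoc msm_r msm_l)
    finally show ?thesis using ANX by simp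
  qed
  define K where "K = B * (X * transpose_mat B)"
  define G where "G = B * (X * (X * transpose_mat B))"
  define S where "S = B * (Y * transpose_mat B)"
  define L where "L = B * transpose_mat B"
  have DK[simp]: "dim_row K = m" "dim_col K = m" "dim_row G = m" "dim_col G = m"
    "dim_row S = m" "dim_col S = m" "dim_row L = m" "dim_col L = m"
    unfolding K_def G_def S_def L_def by auto
  have KT: "transpose_mat K = K" unfolding K_def by (simp add: mtrans massoc)
  have GT: "transpose_mat G = G" unfolding G_def by (simp add: mtrans massoc)
  have ST: "transpose_mat S = S" unfolding S_def by (simp add: mtrans massoc)
  have LT: "transpose_mat L = L" unfolding L_def by (simp add: mtrans massoc)
  have KK: "K * K = K" unfolding K_def by (simp add: massoc T1)
  have KG: "K * G = G" unfolding K_def G_def by (simp add: massoc F1t)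
  have KS: "K * S = S" unfolding K_def S_def by (simp add: massoc F1t)
  have KL: "K * L = L" unfolding K_def L_def by (simp add: massoc F1t)
  have SK: "S * K = S" unfolding K_def S_def by (simp add: massoc T1)
  have LG: "L * G = K"
  proof -
    have "L * G = B * (transpose_mat B * (B * (X * (X * transpose_mat B))))"
      unfolding L_def G_def by (simp add: massoc)
    also have "\<dots> = B * (X * (transpose_mat B * (B * (X * transpose_mat B))))"
      using comm[of "X * transpose_mat B"] by simp
    also have "\<dots> = K" unfolding K_def using T1 by simp
    finally show ?thesis .
  qed
  have GL: "G * L = K"
    using arg_cong[OF LG, of transpose_mat] by (simp add: mtrans GT LT KT)
  have SG: "S * G = B * (Y * (X * transpose_mat B))"
  proof -
    have "S * G = B * (Y * (transpose_mat B * (B * (X * (X * transpose_mat B)))))"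
      unfolding S_def G_def by (simp add: massoc)
    also have "\<dots> = B * (Y * (X * (transpose_mat B * (B * (X * transpose_mat B)))))"
      using comm[of "X * transpose_mat B"] by simp
    finally show ?thesis using T1 by simp
  qed
  define Z where "Z = K + c \<cdot>\<^sub>m G"
  have DZ[simp]: "dim_row Z = m" "dim_col Z = m" unfolding Z_def by auto
  have SZ: "S * Z = K"
  proof -
    have "S * Z = S + c \<cdot>\<^sub>m (B * (Y * (X * transpose_mat B)))"
      unfolding Z_def by (simp add: madd_r msm_r SK SG)
    also have "\<dots> = B * ((Y + c \<cdot>\<^sub>m (Y * X)) * transpose_mat B)"
      unfolding S_def by (simp add: madd_r madd_l msm_r msm_l massoc)
    also have "\<dots> = K" unfolding K_def using XY by simp
    finally show ?thesis .
  qed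
  have ZT: "transpose_mat Z = Z" unfolding Z_def using KT GT by (subst transpose_add[of _ m m]) auto
  have ZS: "Z * S = K"
    using arg_cong[OF SZ, of transpose_mat] by (simp add: mtrans ZT ST KT)
  have KZ: "K * Z = Z" unfolding Z_def by (simp add: madd_r msm_r KK KG)
  have p1: "pinv S = Z"
    by (rule pinv_eq[of _ m m]) (auto simp: SZ ZS KS KZ KT massoc[symmetric])
  have p2: "pinv K = K"
    by (rule pinv_eq[of _ m m]) (auto simp: KK KT)
  have p3: "pinv L = G"
    by (rule pinv_eq[of _ m m]) (auto simp: LG GL KL KG KT massoc[symmetric])
  have e1: "B * inv_mat AC * transpose_mat B = S" unfolding invY S_def by (simp add: massoc)
  have e2: "B * inv_mat AN * transpose_mat B = K" unfolding invX K_def by (simp add: massoc)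
  show ?thesis
    using p1 p2 p3 e1 e2 unfolding Z_def L_def[symmetric] AC_def[symmetric] AN_def[symmetric] by simp
qed



lemma sum_split_prod:
  fixes p q :: nat shows "(\<Sum>t\<in>{0..<p*q}. f t) = (\<Sum>a\<in>{0..<p}. \<Sum>b\<in>{0..<q}. f (a*q+b))"
proof (induction p)
  case 0 then show ?case by simp
next
  case (Suc p)
  have "(\<Sum>t\<in>{0..<Suc p*q}. f t) = (\<Sum>t\<in>{0..<p*q}. f t) + (\<Sum>t\<in>{p*q..<p*q+q}. f t)"
    by (simp add: sum.atLeastLessThan_concat add.commute)
  also have "(\<Sum>t\<in>{p*q..<p*q+q}. f t) = (\<Sum>b\<in>{0..<q}. f (p*q+b))"
    using sum.shift_bounds_nat_ivl[of f 0 "p*q" q] by (simp add: add.commute)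
  finally show ?case using Suc by simp
qed

lemma kron_dim[simp]: "dim_row (kron A B) = dim_row A * dim_row B" "dim_col (kron A B) = dim_col A * dim_col B"
  unfolding kron_def by auto

lemma kron_index: "i < dim_row A * dim_row B \<Longrightarrow> j < dim_col A * dim_col B \<Longrightarrow>
  kron A B $$ (i,j) = A $$ (i div dim_row B, j div dim_col B) * B $$ (i mod dim_row B, j mod dim_col B)"
  unfolding kron_def by auto

lemma div_lt: "i < a * (b::nat) \<Longrightarrow> i div b < a"
  by (simp add: less_mult_imp_div_less)
lemma mod_lt: "i < a * (b::nat) \<Longrightarrow> i mod b < b"
  by (cases "b = 0") auto

lemma kron_mult:
  assumes "dim_col A = dim_row C" "dim_col B = dim_row D"
  shows "kron A B * kron C D = kron (A * C) (B * D)"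
proof (rule eq_matI)
  fix i j assume i: "i < dim_row (kron (A * C) (B * D))" and j: "j < dim_col (kron (A * C) (B * D))"
  have i': "i < dim_row A * dim_row B" and j': "j < dim_col C * dim_col D" using i j by auto
  have "(kron A B * kron C D) $$ (i, j) = (\<Sum>t\<in>{0..<dim_col A * dim_col B}. kron A B $$ (i,t) * kron C D $$ (t,j))"
    using i' j' assms by (auto simp: scalar_prod_def intro!: sum.cong)
  also have "\<dots> = (\<Sum>a\<in>{0..<dim_col A}. \<Sum>b\<in>{0..<dim_col B}.
       kron A B $$ (i,a * dim_col B + b) * kron C D $$ (a * dim_col B + b,j))"
    by (rule sum_split_prod)
  also have "\<dots> = (\<Sum>a\<in>{0..<dim_col A}. \<Sum>b\<in>{0..<dim_col B}.
       (A $$ (i div dim_row B, a) * C $$ (a, j div dim_col D)) * (B $$ (i mod dim_row B, b) * D $$ (b, j mod dim_col D)))"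
  proof (intro sum.cong refl)
    fix a b assume a: "a \<in> {0..<dim_col A}" and b: "b \<in> {0..<dim_col B}"
    have t: "a * dim_col B + b < dim_col A * dim_col B"
    proof -
      have "a * dim_col B + b < a * dim_col B + dim_col B" using b by simp
      also have "\<dots> = Suc a * dim_col B" by simp
      also have "\<dots> \<le> dim_col A * dim_col B" using a by (intro mult_le_mono1) simp
      finally show ?thesis .
    qed
    have t2: "a * dim_col B + b < dim_row C * dim_row D" using t assms by simp
    have dv: "(a * dim_col B + b) div dim_col B = a" "(a * dim_col B + b) mod dim_col B = b" using b by auto
    show "kron A B $$ (i,a * dim_col B + b) * kron C D $$ (a * dim_col B + b,j) =
       (A $$ (i div dim_row B, a) * C $$ (a, j div dim_col D)) * (B $$ (i mod dim_row B, b) * D $$ (b, j mod dim_col D))"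
      using i' j' t t2 dv assms by (simp add: ac_simps kron_index)
  qed
  also have "\<dots> = (\<Sum>a\<in>{0..<dim_col A}. A $$ (i div dim_row B, a) * C $$ (a, j div dim_col D)) *
                   (\<Sum>b\<in>{0..<dim_col B}. B $$ (i mod dim_row B, b) * D $$ (b, j mod dim_col D))"
    by (simp add: sum_product)
  also have "\<dots> = kron (A * C) (B * D) $$ (i, j)"
    using i' j' div_lt[OF i'] mod_lt[OF i'] div_lt[OF j'] mod_lt[OF j'] assms
    by (simp add: scalar_prod_def kron_index)
  finally show "(kron A B * kron C D) $$ (i, j) = kron (A * C) (B * D) $$ (i, j)" .
qed auto

lemma kron_transpose: "transpose_mat (kron A B) = kron (transpose_mat A) (transpose_mat B)"
  by (rule eq_matI) (auto simp: kron_index div_lt mod_lt)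

lemma kron_one: "kron (1\<^sub>m a) (1\<^sub>m b) = 1\<^sub>m (a * b)"
proof (rule eq_matI)
  fix i j assume "i < dim_row (1\<^sub>m (a * b))" "j < dim_col (1\<^sub>m (a * b))"
  hence i: "i < a * b" and j: "j < a * b" by auto
  have "(i div b = j div b \<and> i mod b = j mod b) = (i = j)"
    by (metis div_mult_mod_eq)
  thus "kron (1\<^sub>m a) (1\<^sub>m b) $$ (i, j) = 1\<^sub>m (a * b) $$ (i, j)"
    using i j div_lt[OF i] mod_lt[OF i] div_lt[OF j] mod_lt[OF j] by (auto simp: kron_index)
qed auto

lemma kron_smult_l: "kron (c \<cdot>\<^sub>m A) B = c \<cdot>\<^sub>m kron A B"
  by (rule eq_matI) (auto simp: kron_index div_lt mod_lt)
lemma kron_smult_r: "kron A (c \<cdot>\<^sub>m B) = c \<cdot>\<^sub>m kron A B"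
  by (rule eq_matI) (auto simp: kron_index div_lt mod_lt)
lemma kron_uminus_l: "kron (- A) B = - kron A B"
  by (rule eq_matI) (auto simp: kron_index div_lt mod_lt)



lemma sum_split_add:
  fixes a b :: nat shows "(\<Sum>t\<in>{0..<a+b}. f t) = (\<Sum>t\<in>{0..<a}. f t) + (\<Sum>t\<in>{0..<b}. f (a+t))"
proof -
  have "(\<Sum>t\<in>{0..<a+b}. f t) = (\<Sum>t\<in>{0..<a}. f t) + (\<Sum>t\<in>{a..<a+b}. f t)"
    by (simp add: sum.atLeastLessThan_concat)
  also have "(\<Sum>t\<in>{a..<a+b}. f t) = (\<Sum>t\<in>{0..<b}. f (a+t))"
    using sum.shift_bounds_nat_ivl[of f 0 a b] by (simp add: add.commute)
  finally show ?thesis .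
qed

lemma hcat_dim[simp]: "dim_row (hcat X Y) = dim_row X" "dim_col (hcat X Y) = dim_col X + dim_col Y"
  unfolding hcat_def by auto

lemma hcat_index: "i < dim_row X \<Longrightarrow> j < dim_col X + dim_col Y \<Longrightarrow>
  hcat X Y $$ (i,j) = (if j < dim_col X then X $$ (i,j) else Y $$ (i, j - dim_col X))"
  unfolding hcat_def by auto

lemma hcat_uminus: "dim_row Y = dim_row X \<Longrightarrow> hcat (- X) (- Y) = - hcat X Y"
  by (rule eq_matI) (auto simp: hcat_index)

lemma hcat_mult_transpose:
  assumes "dim_col X = dim_col Z" "dim_col Y = dim_col W" "dim_row Y = dim_row X" "dim_row W = dim_row Z"
  shows "hcat X Y * transpose_mat (hcat Z W) = X * transpose_mat Z + Y * transpose_mat W"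
proof (rule eq_matI)
  fix i j assume "i < dim_row (X * transpose_mat Z + Y * transpose_mat W)" "j < dim_col (X * transpose_mat Z + Y * transpose_mat W)"
  hence i: "i < dim_row X" and j: "j < dim_row Z" using assms by auto
  have "(hcat X Y * transpose_mat (hcat Z W)) $$ (i,j) =
     (\<Sum>t\<in>{0..<dim_col X + dim_col Y}. hcat X Y $$ (i,t) * hcat Z W $$ (j,t))"
    using i j assms by (auto simp: scalar_prod_def intro!: sum.cong)
  also have "\<dots> = (\<Sum>t\<in>{0..<dim_col X}. X $$ (i,t) * Z $$ (j,t)) + (\<Sum>t\<in>{0..<dim_col Y}. Y $$ (i,t) * W $$ (j,t))"
    unfolding sum_split_add using i j assms by (auto simp: hcat_index intro!: sum.cong)
  also have "\<dots> = (X * transpose_mat Z + Y * transpose_mat W) $$ (i,j)"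
    using i j assms by (auto simp: scalar_prod_def intro!: sum.cong)
  finally show "(hcat X Y * transpose_mat (hcat Z W)) $$ (i,j) = (X * transpose_mat Z + Y * transpose_mat W) $$ (i,j)" .
qed (use assms in auto)

lemma hcat_mult_vec:
  assumes x: "dim_vec x = dim_col X + dim_col Y" and "dim_row Y = dim_row X"
  shows "hcat X Y *\<^sub>v x = X *\<^sub>v vec (dim_col X) (\<lambda>i. x $ i) + Y *\<^sub>v vec (dim_col Y) (\<lambda>i. x $ (dim_col X + i))"
proof (rule eq_vecI)
  fix i assume "i < dim_vec (X *\<^sub>v vec (dim_col X) (\<lambda>i. x $ i) + Y *\<^sub>v vec (dim_col Y) (\<lambda>i. x $ (dim_col X + i)))"
  hence i: "i < dim_row X" using assms by auto
  have "(hcat X Y *\<^sub>v x) $ i = (\<Sum>t\<in>{0..<dim_col X + dim_col Y}. hcat X Y $$ (i,t) * x $ t)"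
    using i assms by (auto simp: scalar_prod_def intro!: sum.cong)
  also have "\<dots> = (\<Sum>t\<in>{0..<dim_col X}. X $$ (i,t) * x $ t) + (\<Sum>t\<in>{0..<dim_col Y}. Y $$ (i,t) * x $ (dim_col X + t))"
    unfolding sum_split_add using i assms by (auto simp: hcat_index intro!: sum.cong)
  also have "\<dots> = (X *\<^sub>v vec (dim_col X) (\<lambda>i. x $ i) + Y *\<^sub>v vec (dim_col Y) (\<lambda>i. x $ (dim_col X + i))) $ i"
    using i assms by (auto simp: scalar_prod_def intro!: sum.cong)
  finally show "(hcat X Y *\<^sub>v x) $ i = (X *\<^sub>v vec (dim_col X) (\<lambda>i. x $ i) + Y *\<^sub>v vec (dim_col Y) (\<lambda>i. x $ (dim_col X + i))) $ i" .
qed (use assms in auto)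

definition Ml :: "nat \<Rightarrow> real mat" where
  "Ml n = mat (n - 1) n (\<lambda>(j,i). if i \<le> j then 1 else 0)"

lemma Mmat_dim[simp]: "dim_row (Mmat n) = n" "dim_col (Mmat n) = n - 1"
  unfolding Mmat_def by auto
lemma Ml_dim[simp]: "dim_row (Ml n) = n - 1" "dim_col (Ml n) = n"
  unfolding Ml_def by auto

lemma Ml_Mmat: "Ml n * Mmat n = 1\<^sub>m (n - 1)"
proof (rule eq_matI)
  fix j k assume "j < dim_row (1\<^sub>m (n - 1))" "k < dim_col (1\<^sub>m (n - 1))"
  hence j: "j < n - 1" and k: "k < n - 1" by auto
  have "(Ml n * Mmat n) $$ (j,k) = (\<Sum>i\<in>{0..<n}. (if i \<le> j then 1 else 0) *
       ((if i = k then 1 else 0) - (if i = k + 1 then 1 else 0)))"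
    using j k unfolding Ml_def Mmat_def by (auto simp: scalar_prod_def intro!: sum.cong)
  also have "\<dots> = (\<Sum>i\<in>{0..<n}. (if i = k then (if k \<le> j then 1 else 0) else 0)
                 - (if i = k + 1 then (if k + 1 \<le> j then 1 else 0) else 0))"
    by (rule sum.cong) auto
  also have "\<dots> = (\<Sum>i\<in>{0..<n}. (if i = k then (if k \<le> j then 1 else 0) else 0))
                 - (\<Sum>i\<in>{0..<n}. (if i = k + 1 then (if k + 1 \<le> j then 1 else 0) else 0))"
    by (rule sum_subtractf)
  also have "\<dots> = (if k \<le> j then 1 else 0) - (if k + 1 \<le> j then 1 else 0)"
    using j k by auto
  also have "\<dots> = 1\<^sub>m (n - 1) $$ (j,k)" using j k by auto
  finally show "(Ml n * Mmat n) $$ (j,k) = 1\<^sub>m (n - 1) $$ (j,k)" .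
qed auto



lemma quad2:
  fixes B C :: "real mat"
  assumes B: "B \<in> carrier_mat m k" and C: "C \<in> carrier_mat p k" and x: "x \<in> carrier_vec k"
    and h: "(transpose_mat B * B + transpose_mat C * C) *\<^sub>v x = 0\<^sub>v k"
  shows "B *\<^sub>v x = 0\<^sub>v m \<and> C *\<^sub>v x = 0\<^sub>v p"
proof -
  have e: "(transpose_mat B * B + transpose_mat C * C) *\<^sub>v x = (transpose_mat B * B) *\<^sub>v x + (transpose_mat C * C) *\<^sub>v x"
    by (rule add_mult_distrib_mat_vec[of _ k k]) (use x B C in auto)
  have "0 = x \<bullet> ((transpose_mat B * B + transpose_mat C * C) *\<^sub>v x)" using h x by simp
  also have "\<dots> = x \<bullet> ((transpose_mat B * B) *\<^sub>v x) + x \<bullet> ((transpose_mat C * C) *\<^sub>v x)"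
    unfolding e by (rule scalar_prod_add_distrib[of _ k]) (use x B C in auto)
  also have "\<dots> = (B *\<^sub>v x) \<bullet> (B *\<^sub>v x) + (C *\<^sub>v x) \<bullet> (C *\<^sub>v x)"
    using quad_form[OF B x] quad_form[OF C x] by simp
  finally have "(B *\<^sub>v x) \<bullet> (B *\<^sub>v x) = 0" "(C *\<^sub>v x) \<bullet> (C *\<^sub>v x) = 0"
    using sprod_self_ge[of "B *\<^sub>v x"] sprod_self_ge[of "C *\<^sub>v x"] by linarith+
  moreover have "B *\<^sub>v x \<in> carrier_vec m" "C *\<^sub>v x \<in> carrier_vec p"
    using mult_mat_vec_carrier[OF B x] mult_mat_vec_carrier[OF C x] by auto
  ultimately show ?thesis using sprod_self_0[of "B *\<^sub>v x" m] sprod_self_0[of "C *\<^sub>v x" p] by auto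
qed

lemma Bmat_eq: "n > 0 \<Longrightarrow> Bmat n = real n \<cdot>\<^sub>m Mmat n"
  unfolding Bmat_def hh_def by simp

lemma Bmat_dim[simp]: "dim_row (Bmat n) = n" "dim_col (Bmat n) = n - 1"
  unfolding Bmat_def by auto

lemma Ml_Bmat: "n > 0 \<Longrightarrow> Ml n * Bmat n = real n \<cdot>\<^sub>m 1\<^sub>m (n - 1)"
  using Ml_Mmat[of n] by (simp add: Bmat_eq msm_r)

lemma B_dims[simp]:
  "dim_row (Bux n) = n * n" "dim_col (Bux n) = n * (n - 1)"
  "dim_row (Bvy n) = n * n" "dim_col (Bvy n) = (n - 1) * n"
  "dim_row (Bqx n) = (n - 1) * n" "dim_col (Bqx n) = (n - 1) * (n - 1)"
  "dim_row (Bqy n) = n * (n - 1)" "dim_col (Bqy n) = (n - 1) * (n - 1)"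
  unfolding Bux_def Bvy_def Bqx_def Bqy_def by auto

lemma E1: "Bux n * Bqy n = Bvy n * Bqx n"
  unfolding Bux_def Bvy_def Bqx_def Bqy_def by (simp add: kron_mult)

lemma E2: "transpose_mat (Bux n) * Bvy n = Bqy n * transpose_mat (Bqx n)"
  unfolding Bux_def Bvy_def Bqx_def Bqy_def by (simp add: kron_mult kron_transpose)

lemma L1: "n > 0 \<Longrightarrow> kron (1\<^sub>m n) (Ml n) * Bux n = real n \<cdot>\<^sub>m 1\<^sub>m (n * (n - 1))"
  unfolding Bux_def by (simp add: kron_mult Ml_Bmat kron_smult_r kron_one)

lemma L2: "n > 0 \<Longrightarrow> kron (Ml n) (1\<^sub>m n) * Bvy n = real n \<cdot>\<^sub>m 1\<^sub>m ((n - 1) * n)"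
  unfolding Bvy_def by (simp add: kron_mult Ml_Bmat kron_smult_l kron_one)

lemma BB_carrier: "BB n \<in> carrier_mat (n * n) (2 * n * (n - 1))"
  unfolding BB_def carrier_mat_def by (auto simp: algebra_simps)

lemma CC_carrier: "CC n \<in> carrier_mat ((n - 1) * (n - 1)) (2 * n * (n - 1))"
  unfolding CC_def carrier_mat_def by (auto simp: algebra_simps)

lemma BBC: "BB n * transpose_mat (CC n) = 0\<^sub>m (n * n) ((n - 1) * (n - 1))"
proof -
  have t: "transpose_mat (- transpose_mat (Bqy n)) = - Bqy n" by (simp only: transpose_uminus transpose_transpose)
  have "BB n * transpose_mat (CC n) = - Bux n * transpose_mat (- transpose_mat (Bqy n)) + - Bvy n * transpose_mat (transpose_mat (Bqx n))"
    unfolding BB_def CC_def by (rule hcat_mult_transpose) simp_all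
  also have "\<dots> = - Bux n * - Bqy n + - Bvy n * Bqx n" by (simp only: t transpose_transpose)
  also have "\<dots> = - (- (Bvy n * Bqx n)) + - (Bvy n * Bqx n)"
    by (simp add: E1)
  also have "\<dots> = 0\<^sub>m (n * n) ((n - 1) * (n - 1))"
    by (rule eq_matI) simp_all
  finally show ?thesis .
qed

lemma mult_zero_vec': "dim_col L = k \<Longrightarrow> (L::real mat) *\<^sub>v 0\<^sub>v k = 0\<^sub>v (dim_row L)"
proof (rule eq_vecI)
  fix i assume "dim_col L = k" "i < dim_vec (0\<^sub>v (dim_row L))"
  thus "(L *\<^sub>v 0\<^sub>v k) $ i = 0\<^sub>v (dim_row L) $ i"
    by (simp add: scalar_prod_def)
qed simp

lemma inj_vec:
  fixes M L :: "real mat"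
  assumes LM: "L * M = c \<cdot>\<^sub>m 1\<^sub>m a" and c: "c \<noteq> 0" and M: "dim_col M = a" and L: "dim_col L = dim_row M"
    and u: "u \<in> carrier_vec a" and Mu: "M *\<^sub>v u = 0\<^sub>v (dim_row M)"
  shows "u = 0\<^sub>v a"
proof -
  have "(L * M) *\<^sub>v u = L *\<^sub>v (M *\<^sub>v u)"
    by (rule assoc_mult_mat_vec[of _ "dim_row L" "dim_col L" _ a]) (use u M L in auto)
  also have "\<dots> = 0\<^sub>v (dim_row L)" unfolding Mu using L by (rule mult_zero_vec')
  finally have e1: "(L * M) *\<^sub>v u = 0\<^sub>v (dim_row L)" .
  have dl: "dim_row L = a" using arg_cong[OF LM, of dim_row] by simp
  have e2: "(L * M) *\<^sub>v u = c \<cdot>\<^sub>v u" unfolding LM using u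
    by (subst smult_mat_vec) auto
  have "c \<cdot>\<^sub>v u = 0\<^sub>v a" using e1 e2 dl by simp
  have "c * u $ i = 0" if i: "i < a" for i
  proof -
    have "(c \<cdot>\<^sub>v u) $ i = 0\<^sub>v a $ i" using \<open>c \<cdot>\<^sub>v u = 0\<^sub>v a\<close> by simp
    thus ?thesis using i u by simp
  qed
  thus ?thesis using c u by (intro eq_vecI) auto
qed



lemma neg_sum_mv:
  fixes A B :: "real mat"
  assumes "dim_vec u = dim_col A" "dim_vec v = dim_col B" "dim_row A = dim_row B"
    and "(- A) *\<^sub>v u + (- B) *\<^sub>v v = 0\<^sub>v (dim_row A)"
  shows "A *\<^sub>v u + B *\<^sub>v v = 0\<^sub>v (dim_row A)"
proof (rule eq_vecI)
  fix i assume i: "i < dim_vec (0\<^sub>v (dim_row A))"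
  have "((- A) *\<^sub>v u + (- B) *\<^sub>v v) $ i = 0\<^sub>v (dim_row A) $ i" using assms(4) by simp
  thus "(A *\<^sub>v u + B *\<^sub>v v) $ i = 0\<^sub>v (dim_row A) $ i" using assms(1-3) i by simp
qed (use assms in simp)

lemma neg_eq_mv:
  fixes A B :: "real mat"
  assumes "dim_vec u = dim_col A" "dim_vec v = dim_col B" "dim_row A = dim_row B"
    and "(- A) *\<^sub>v u + B *\<^sub>v v = 0\<^sub>v (dim_row A)"
  shows "A *\<^sub>v u = B *\<^sub>v v"
proof (rule eq_vecI)
  fix i assume i: "i < dim_vec (B *\<^sub>v v)"
  have "((- A) *\<^sub>v u + B *\<^sub>v v) $ i = 0\<^sub>v (dim_row A) $ i" using assms(4) by simp
  thus "(A *\<^sub>v u) $ i = (B *\<^sub>v v) $ i" using assms(1-3) i by simp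
qed (use assms in simp)

lemma AN_inj:
  assumes n: "n \<ge> 2" and x: "x \<in> carrier_vec (2 * n * (n - 1))"
    and h: "(transpose_mat (BB n) * BB n + transpose_mat (CC n) * CC n) *\<^sub>v x = 0\<^sub>v (2 * n * (n - 1))"
  shows "x = 0\<^sub>v (2 * n * (n - 1))"
proof -
  define a where "a = n * (n - 1)"
  define b where "b = (n - 1) * n"
  have kab: "2 * n * (n - 1) = a + b" unfolding a_def b_def by (simp add: algebra_simps)
  have dx: "dim_vec x = a + b" using x kab by simp
  from quad2[OF BB_carrier CC_carrier x h]
  have Bx: "BB n *\<^sub>v x = 0\<^sub>v (n * n)" and Cx: "CC n *\<^sub>v x = 0\<^sub>v ((n - 1) * (n - 1))" by auto
  define u where "u = vec a (\<lambda>i. x $ i)"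
  define v where "v = vec b (\<lambda>i. x $ (a + i))"
  have uc: "u \<in> carrier_vec a" and vc: "v \<in> carrier_vec b" unfolding u_def v_def by auto
  have "BB n *\<^sub>v x = (- Bux n) *\<^sub>v u + (- Bvy n) *\<^sub>v v"
    unfolding BB_def u_def v_def by (subst hcat_mult_vec) (use dx in \<open>auto simp: a_def b_def\<close>)
  hence w1: "Bux n *\<^sub>v u + Bvy n *\<^sub>v v = 0\<^sub>v (n * n)"
    using neg_sum_mv[of u "Bux n" v "Bvy n"] Bx uc vc unfolding a_def b_def by simp
  have "CC n *\<^sub>v x = (- transpose_mat (Bqy n)) *\<^sub>v u + transpose_mat (Bqx n) *\<^sub>v v"
    unfolding CC_def u_def v_def by (subst hcat_mult_vec) (use dx in \<open>auto simp: a_def b_def\<close>)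
  hence w2: "transpose_mat (Bqy n) *\<^sub>v u = transpose_mat (Bqx n) *\<^sub>v v"
    using neg_eq_mv[of u "transpose_mat (Bqy n)" v "transpose_mat (Bqx n)"] Cx uc vc unfolding a_def b_def by simp
  have Buxc: "Bux n \<in> carrier_mat (n * n) a" "Bvy n \<in> carrier_mat (n * n) b"
    "transpose_mat (Bqy n) \<in> carrier_mat ((n - 1) * (n - 1)) a"
    "transpose_mat (Bqx n) \<in> carrier_mat ((n - 1) * (n - 1)) b"
    unfolding a_def b_def by auto
  have "(transpose_mat (Bux n) * Bux n + transpose_mat (transpose_mat (Bqy n)) * transpose_mat (Bqy n)) *\<^sub>v u
      = (transpose_mat (Bux n) * Bux n) *\<^sub>v u + (transpose_mat (transpose_mat (Bqy n)) * transpose_mat (Bqy n)) *\<^sub>v u"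
    by (rule add_mult_distrib_mat_vec[of _ a a]) (use uc Buxc in auto)
  also have "\<dots> = transpose_mat (Bux n) *\<^sub>v (Bux n *\<^sub>v u) + Bqy n *\<^sub>v (transpose_mat (Bqy n) *\<^sub>v u)"
    using uc Buxc by (simp add: assoc_mult_mat_vec[of _ a "n * n" _ a] assoc_mult_mat_vec[of _ a "(n - 1) * (n - 1)" _ a])
  also have "Bqy n *\<^sub>v (transpose_mat (Bqy n) *\<^sub>v u) = (Bqy n * transpose_mat (Bqx n)) *\<^sub>v v"
    unfolding w2 using vc Buxc by (subst assoc_mult_mat_vec[of _ a "(n - 1) * (n - 1)" _ b]) (auto simp: a_def)
  also have "\<dots> = transpose_mat (Bux n) *\<^sub>v (Bvy n *\<^sub>v v)"
    unfolding E2[symmetric] using vc Buxc by (subst assoc_mult_mat_vec[of _ a "n * n" _ b]) auto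
  also have "transpose_mat (Bux n) *\<^sub>v (Bux n *\<^sub>v u) + transpose_mat (Bux n) *\<^sub>v (Bvy n *\<^sub>v v)
     = transpose_mat (Bux n) *\<^sub>v (Bux n *\<^sub>v u + Bvy n *\<^sub>v v)"
    by (rule mult_add_distrib_mat_vec[of _ a "n * n", symmetric]) (use uc vc Buxc in auto)
  also have "\<dots> = 0\<^sub>v a" unfolding w1 by (subst mult_zero_vec') (auto simp: a_def)
  finally have "(transpose_mat (Bux n) * Bux n + transpose_mat (transpose_mat (Bqy n)) * transpose_mat (Bqy n)) *\<^sub>v u = 0\<^sub>v a" .
  from quad2[OF Buxc(1) Buxc(3) uc this] have Bu: "Bux n *\<^sub>v u = 0\<^sub>v (n * n)" by simp
  have n0: "n > 0" "real n \<noteq> 0" using n by auto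
  have "u = 0\<^sub>v (n * (n - 1))"
    by (rule inj_vec[OF L1[OF n0(1)] n0(2)]) (use uc Bu in \<open>auto simp: a_def\<close>)
  hence u0: "u = 0\<^sub>v a" unfolding a_def .
  have "Bux n *\<^sub>v u = 0\<^sub>v (n * n)" by (rule Bu)
  hence Bv: "Bvy n *\<^sub>v v = 0\<^sub>v (n * n)" using w1 vc Buxc
    by (metis carrier_matD(1) left_zero_vec mult_mat_vec_carrier)
  have "v = 0\<^sub>v ((n - 1) * n)"
    by (rule inj_vec[OF L2[OF n0(1)] n0(2)]) (use vc Bv in \<open>auto simp: b_def\<close>)
  hence v0: "v = 0\<^sub>v b" unfolding b_def .
  show ?thesis
  proof (rule eq_vecI)
    fix i assume "i < dim_vec (0\<^sub>v (2 * n * (n - 1)))"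
    hence i: "i < a + b" using kab by simp
    show "x $ i = 0\<^sub>v (2 * n * (n - 1)) $ i"
    proof (cases "i < a")
      case True
      have "u $ i = 0" using u0 True by simp
      thus ?thesis using True i kab unfolding u_def by simp
    next
      case False
      have "v $ (i - a) = 0" using v0 False i by simp
      thus ?thesis using False i kab unfolding v_def by simp
    qed
  qed (use x in simp)
qed



theorem mainTheorem10:
  fixes n :: nat
  assumes "n \<ge> 2"
  shows "let h = hh n;
             A = AN n + (2 / h^2) \<cdot>\<^sub>m 1\<^sub>m (2 * n * (n - 1));
             S = BB n * inv_mat A * transpose_mat (BB n);
             SN = BB n * inv_mat (AN n) * transpose_mat (BB n)
         in pinv S = pinv SN + (2 / h^2) \<cdot>\<^sub>m pinv (BB n * transpose_mat (BB n))"
proof -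
  have "hh n > 0" using assms unfolding hh_def by simp
  hence c: "2 / (hh n)^2 > 0" by simp
  show ?thesis unfolding Let_def AN_def
    by (rule abstract_main[OF BB_carrier CC_carrier BBC c]) (rule AN_inj[OF assms])
qed

end
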